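(* Let $P_7(\lambda;m,\varepsilon)$ be the seventh-order polynomial in $\lambda$ defined in the context. There exist $\upsilon_0>0$ and $\varepsilon_*>0$ such that, for all $m\in[3,7]$, all $\varepsilon\in(0,\varepsilon_* )$ and any purely imaginary root $i\upsilon$ of $P_7(\cdot;m,\varepsilon)$ with $\upsilon>0$, it holds that $0<\upsilon<\upsilon_0$.
   Context: $P_7(\lambda;m,\varepsilon)=a_0\lambda^7+a_1\lambda^6+a_2\lambda^5+a_3\lambda^4+a_4\lambda^3+a_5\lambda^2+a_6\lambda+a_7$ with $a_i=a_i(m,\varepsilon)$: $a_0=2^{11}(\varepsilon-1)^4\varepsilon^2$; $a_1=-2^{11}(\varepsilon^2-\varepsilon)^2[(5\varepsilon^2-2\varepsilon+1)m^2+2(\varepsilon+1)^2m+4]$; $a_2=(\varepsilon^2-\varepsilon)[\varepsilon(59\varepsilon^3-9\varepsilon^2+17\varepsilon-3)m^4+4\varepsilon(15\varepsilon^3+15\varepsilon^2+17\varepsilon+1)m^3+4(\varepsilon+2)(\varepsilon^3+9\varepsilon^2+5\varepsilon+1)m^2-8(2\varepsilon^3-3\varepsilon^2-4\varepsilon-3)m-8(\varepsilon-1)(\varepsilon+2)]$; $a_3=2^7[-\varepsilon^2(5\varepsilon-1)(9\varepsilon^3+\varepsilon^2+7\varepsilon-1)m^6-2\varepsilon^2(59\varepsilon^4-8\varepsilon^3+74\varepsilon^2+8\varepsilon-5)m^5-4\varepsilon(4\varepsilon^5+27\varepsilon^4+24\varepsilon^3+37\varepsilon^2+6\varepsilon-2)m^4+4\varepsilon(4\varepsilon^5+20\varepsilon^4-31\varepsilon^3-23\varepsilon^2-33\varepsilon-1)m^3+4(9\varepsilon^5+27\varepsilon^4-15\varepsilon^3-24\varepsilon^2-12\varepsilon-1)m^2+4(\varepsilon^4+17\varepsilon^3-7\varepsilon^2-9\varepsilon-2)m-4(\varepsilon-1)^2(2\varepsilon+1)]$;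 $a_4=2^3[\varepsilon^2(9\varepsilon-1)^2(\varepsilon-1)^2m^8+8\varepsilon^2(\varepsilon-1)(45\varepsilon^3+5\varepsilon^2-21\varepsilon+3)m^7+8\varepsilon(21\varepsilon^5-58\varepsilon^4-84\varepsilon^3-32\varepsilon^2+27\varepsilon-2)m^6-16\varepsilon(34\varepsilon^5+42\varepsilon^4+113\varepsilon^3+81\varepsilon^2-7\varepsilon-7)m^5-16(7\varepsilon^6+96\varepsilon^5+75\varepsilon^4+176\varepsilon^3+42\varepsilon^2-10\varepsilon-2)m^4+16\varepsilon(6\varepsilon^4-75\varepsilon^3-65\varepsilon^2-117\varepsilon-5)m^3+16(29\varepsilon^4-7\varepsilon^3-48\varepsilon^2-31\varepsilon-7)m^2+32(\varepsilon-1)(7\varepsilon^2+14\varepsilon+3)m-16(\varepsilon-1)^2]$; $a_5=2^5m[\varepsilon^2(\varepsilon-1)^2(9\varepsilon^2+\varepsilon-2)m^7+(\varepsilon^2-\varepsilon)(38\varepsilon^4+46\varepsilon^3-39\varepsilon^2+3)m^6+(36\varepsilon^6+33\varepsilon^5-123\varepsilon^4-95\varepsilon^3+54\varepsilon^2-1)m^5-(8\varepsilon^6-8\varepsilon^5+169\varepsilon^4+233\varepsilon^3+25\varepsilon^2-41\varepsilon-2)m^4-(60\varepsilon^5+110\varepsilon^4+320\varepsilon^3+129\varepsilon^2-22\varepsilon-21)m^3-4(16\varepsilon^4+37\varepsilon^3+41\varepsilon^2+7\varepsilon-5)m^2+2(4\varepsilon^3-37\varepsilon^2-10\varepsilon-5)m+4(5\varepsilon^2-2\varepsilon-3)]$;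 $a_6=2^3m[2\varepsilon^2(\varepsilon-1)^2(\varepsilon+1)(2\varepsilon-1)m^7+(\varepsilon^2-\varepsilon)(16\varepsilon^4+58\varepsilon^3-19\varepsilon^2-10\varepsilon+3)m^6+(16\varepsilon^6+72\varepsilon^5-39\varepsilon^4-171\varepsilon^3+42\varepsilon^2+17\varepsilon-1)m^5+2(20\varepsilon^5-12\varepsilon^4-113\varepsilon^3-69\varepsilon^2+41\varepsilon+5)m^4-(2\varepsilon+1)(18\varepsilon^3+81\varepsilon^2+80\varepsilon-51)m^3-4(28\varepsilon^3+31\varepsilon^2+20\varepsilon-15)m^2-4(11\varepsilon-3)(\varepsilon+1)m-8(1-\varepsilon)]$; $a_7=2^4(m^2+m^3)[\varepsilon^2(\varepsilon^2-1)(2\varepsilon-1)m^4+\varepsilon(2\varepsilon-1)(3\varepsilon^2-3\varepsilon-2)m^3+(2\varepsilon^4-13\varepsilon^2+4\varepsilon+1)m^2-3(2\varepsilon-1)(\varepsilon+1)m+2(1-2\varepsilon)]$. *)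

theory Defs
  imports Complex_Main "HOL-Computational_Algebra.Polynomial"
begin

definition a0 :: "real \<Rightarrow> real \<Rightarrow> real" where
  "a0 m e = 2^11 * (e - 1)^4 * e^2"

definition a1 :: "real \<Rightarrow> real \<Rightarrow> real" where
  "a1 m e = - (2^11) * (e^2 - e)^2 * ((5*e^2 - 2*e + 1)*m^2 + 2*(e + 1)^2*m + 4)"

definition a2 :: "real \<Rightarrow> real \<Rightarrow> real" where
  "a2 m e = (e^2 - e) * (e*(59*e^3 - 9*e^2 + 17*e - 3)*m^4
     + 4*e*(15*e^3 + 15*e^2 + 17*e + 1)*m^3
     + 4*(e + 2)*(e^3 + 9*e^2 + 5*e + 1)*m^2
     - 8*(2*e^3 - 3*e^2 - 4*e - 3)*m
     - 8*(e - 1)*(e + 2))"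

definition a3 :: "real \<Rightarrow> real \<Rightarrow> real" where
  "a3 m e = 2^7 * ( - (e^2*(5*e - 1)*(9*e^3 + e^2 + 7*e - 1)*m^6)
     - 2*e^2*(59*e^4 - 8*e^3 + 74*e^2 + 8*e - 5)*m^5
     - 4*e*(4*e^5 + 27*e^4 + 24*e^3 + 37*e^2 + 6*e - 2)*m^4
     + 4*e*(4*e^5 + 20*e^4 - 31*e^3 - 23*e^2 - 33*e - 1)*m^3
     + 4*(9*e^5 + 27*e^4 - 15*e^3 - 24*e^2 - 12*e - 1)*m^2
     + 4*(e^4 + 17*e^3 - 7*e^2 - 9*e - 2)*m
     - 4*(e - 1)^2*(2*e + 1))"

definition a4 :: "real \<Rightarrow> real \<Rightarrow> real" where
  "a4 m e = 2^3 * ( e^2*(9*e - 1)^2*(e - 1)^2*m^8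
     + 8*e^2*(e - 1)*(45*e^3 + 5*e^2 - 21*e + 3)*m^7
     + 8*e*(21*e^5 - 58*e^4 - 84*e^3 - 32*e^2 + 27*e - 2)*m^6
     - 16*e*(34*e^5 + 42*e^4 + 113*e^3 + 81*e^2 - 7*e - 7)*m^5
     - 16*(7*e^6 + 96*e^5 + 75*e^4 + 176*e^3 + 42*e^2 - 10*e - 2)*m^4
     + 16*e*(6*e^4 - 75*e^3 - 65*e^2 - 117*e - 5)*m^3
     + 16*(29*e^4 - 7*e^3 - 48*e^2 - 31*e - 7)*m^2
     + 32*(e - 1)*(7*e^2 + 14*e + 3)*m
     - 16*(e - 1)^2)"

definition a5 :: "real \<Rightarrow> real \<Rightarrow> real" where
  "a5 m e = 2^5 * m * ( e^2*(e - 1)^2*(9*e^2 + e - 2)*m^7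
     + (e^2 - e)*(38*e^4 + 46*e^3 - 39*e^2 + 3)*m^6
     + (36*e^6 + 33*e^5 - 123*e^4 - 95*e^3 + 54*e^2 - 1)*m^5
     - (8*e^6 - 8*e^5 + 169*e^4 + 233*e^3 + 25*e^2 - 41*e - 2)*m^4
     - (60*e^5 + 110*e^4 + 320*e^3 + 129*e^2 - 22*e - 21)*m^3
     - 4*(16*e^4 + 37*e^3 + 41*e^2 + 7*e - 5)*m^2
     + 2*(4*e^3 - 37*e^2 - 10*e - 5)*m
     + 4*(5*e^2 - 2*e - 3))"

definition a6 :: "real \<Rightarrow> real \<Rightarrow> real" where
  "a6 m e = 2^3 * m * ( 2*e^2*(e - 1)^2*(e + 1)*(2*e - 1)*m^7
     + (e^2 - e)*(16*e^4 + 58*e^3 - 19*e^2 - 10*e + 3)*m^6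
     + (16*e^6 + 72*e^5 - 39*e^4 - 171*e^3 + 42*e^2 + 17*e - 1)*m^5
     + 2*(20*e^5 - 12*e^4 - 113*e^3 - 69*e^2 + 41*e + 5)*m^4
     - (2*e + 1)*(18*e^3 + 81*e^2 + 80*e - 51)*m^3
     - 4*(28*e^3 + 31*e^2 + 20*e - 15)*m^2
     - 4*(11*e - 3)*(e + 1)*m
     - 8*(1 - e))"

definition a7 :: "real \<Rightarrow> real \<Rightarrow> real" where
  "a7 m e = 2^4 * (m^2 + m^3) * ( e^2*(e^2 - 1)*(2*e - 1)*m^4
     + e*(2*e - 1)*(3*e^2 - 3*e - 2)*m^3
     + (2*e^4 - 13*e^2 + 4*e + 1)*m^2
     - 3*(2*e - 1)*(e + 1)*m
     + 2*(1 - 2*e))"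

definition P7 :: "real \<Rightarrow> real \<Rightarrow> real poly" where
  "P7 m e = Poly [a7 m e, a6 m e, a5 m e, a4 m e, a3 m e, a2 m e, a1 m e, a0 m e]"

end

theory Submission
  imports Defs
begin

lemma monpos: "0 \<le> e \<Longrightarrow> 0 \<le> m \<Longrightarrow> 0 \<le> (e::real)^k * m^j"
  by simp

lemma monle: "0 \<le> e \<Longrightarrow> e \<le> 1 \<Longrightarrow> 0 \<le> m \<Longrightarrow> m \<le> 7 \<Longrightarrow> (e::real)^k * m^j \<le> 7^j"
proof -
  assume a: "0 \<le> e" "e \<le> 1" "0 \<le> m" "m \<le> 7"
  have "e^k \<le> 1" using a by (simp add: power_le_one)
  moreover have "m^j \<le> 7^j" using a by (simp add: power_mono)
  ultimately have "e^k * m^j \<le> 1 * 7^j" using a by (intro mult_mono) auto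
  then show ?thesis by simp
qed

lemma h8: "1000 \<le> (X::real) \<Longrightarrow> 8000 \<le> 8*X" by linarith

lemma h8b: "(X::real) \<le> 299326804 \<Longrightarrow> 8*X \<le> 2394614432" by linarith

lemma mon: "0 \<le> e \<Longrightarrow> e \<le> d \<Longrightarrow> d \<le> 1 \<Longrightarrow> 0 \<le> m \<Longrightarrow> m \<le> 7 \<Longrightarrow> 0 < k \<Longrightarrow> (e::real)^k * m^j \<le> d * 7^j"
proof -
  assume a: "0 \<le> e" "e \<le> d" "d \<le> 1" "0 \<le> m" "m \<le> 7" "0 < k"
  have "e^k \<le> e^1" using a by (intro power_decreasing) auto
  then have "e^k \<le> d" using a by simp
  moreover have "m^j \<le> 7^j" using a by (simp add: power_mono)
  ultimately show ?thesis using a by (intro mult_mono) auto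
qed

lemma lin_Q:
  fixes m m2 m4 x0 x1 x2 x3 x4 x5 x6 x7 x8 x9 x10 x11 x12 x13 x14 x15 x16 :: real
  assumes "x0 \<le> 1/100000000" "0 \<le> x0" "x1 \<le> 7/100000000" "0 \<le> x1" "x2 \<le> 49/100000000" "0 \<le> x2" "x3 \<le> 343/100000000" "0 \<le> x3" "x4 \<le> 2401/100000000" "0 \<le> x4" "x5 \<le> 1/100000000" "0 \<le> x5" "x6 \<le> 7/100000000" "0 \<le> x6" "x7 \<le> 49/100000000" "0 \<le> x7" "x8 \<le> 343/100000000" "0 \<le> x8" "x9 \<le> 2401/100000000" "0 \<le> x9" "x10 \<le> 7/100000000" "0 \<le> x10" "x11 \<le> 49/100000000" "0 \<le> x11" "x12 \<le> 343/100000000" "0 \<le> x12" "x13 \<le> 2401/100000000" "0 \<le> x13" "x14 \<le> 49/100000000" "0 \<le> x14" "x15 \<le> 343/100000000" "0 \<le> x15" "x16 \<le> 2401/100000000" "0 \<le> x16" "9 \<le> m2" "3 \<le> m"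
  shows "0 \<le> 16*(1) + 24*(m) + 8*(m2) - 8*(x0) + 32*(x1) + 44*(x2) + 4*(x3) - 3*(x4) - 8*(x5) + 24*(x6) + 92*(x7) + 68*(x8) + 17*(x9) - 16*(x10) + 44*(x11) + 60*(x12) - 9*(x13) + 4*(x14) + 60*(x15) + 59*(x16)"
  using assms by linarith

lemma Q_pos:
  assumes "0 < e" "e < 1/100000000" "3 \<le> m" "m \<le> 7"
  shows "a2 m e \<le> 0"
proof -
  have eq: "a2 m e = (e^2 - e) * (16*(1) + 24*(m) + 8*(m^2) - 8*(e) + 32*(e*m) + 44*(e*m^2) + 4*(e*m^3) - 3*(e*m^4) - 8*(e^2) + 24*(e^2*m) + 92*(e^2*m^2) + 68*(e^2*m^3) + 17*(e^2*m^4) - 16*(e^3*m) + 44*(e^3*m^2) + 60*(e^3*m^3) - 9*(e^3*m^4) + 4*(e^4*m^2) + 60*(e^4*m^3) + 59*(e^4*m^4))" unfolding a2_def by (simp add: algebra_simps power2_eq_square power3_eq_cube eval_nat_numeral)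
  have b0a: "e \<le> 1/100000000" using mon[of e "1/100000000" m 1 0] assms by (simp add: less_imp_le)
  have b0b: "0 \<le> e" using monpos[of e m 1 0] assms by (simp add: less_imp_le)
  have b1a: "e*m \<le> 7/100000000" using mon[of e "1/100000000" m 1 1] assms by (simp add: less_imp_le)
  have b1b: "0 \<le> e*m" using monpos[of e m 1 1] assms by (simp add: less_imp_le)
  have b2a: "e*m^2 \<le> 49/100000000" using mon[of e "1/100000000" m 1 2] assms by (simp add: less_imp_le)
  have b2b: "0 \<le> e*m^2" using monpos[of e m 1 2] assms by (simp add: less_imp_le)
  have b3a: "e*m^3 \<le> 343/100000000" using mon[of e "1/100000000" m 1 3] assms by (simp add: less_imp_le)
  have b3b: "0 \<le> e*m^3" using monpos[of e m 1 3] assms by (simp add: less_imp_le)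
  have b4a: "e*m^4 \<le> 2401/100000000" using mon[of e "1/100000000" m 1 4] assms by (simp add: less_imp_le)
  have b4b: "0 \<le> e*m^4" using monpos[of e m 1 4] assms by (simp add: less_imp_le)
  have b5a: "e^2 \<le> 1/100000000" using mon[of e "1/100000000" m 2 0] assms by (simp add: less_imp_le)
  have b5b: "0 \<le> e^2" using monpos[of e m 2 0] assms by (simp add: less_imp_le)
  have b6a: "e^2*m \<le> 7/100000000" using mon[of e "1/100000000" m 2 1] assms by (simp add: less_imp_le)
  have b6b: "0 \<le> e^2*m" using monpos[of e m 2 1] assms by (simp add: less_imp_le)
  have b7a: "e^2*m^2 \<le> 49/100000000" using mon[of e "1/100000000" m 2 2] assms by (simp add: less_imp_le)
  have b7b: "0 \<le> e^2*m^2" using monpos[of e m 2 2] assms by (simp add: less_imp_le)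
  have b8a: "e^2*m^3 \<le> 343/100000000" using mon[of e "1/100000000" m 2 3] assms by (simp add: less_imp_le)
  have b8b: "0 \<le> e^2*m^3" using monpos[of e m 2 3] assms by (simp add: less_imp_le)
  have b9a: "e^2*m^4 \<le> 2401/100000000" using mon[of e "1/100000000" m 2 4] assms by (simp add: less_imp_le)
  have b9b: "0 \<le> e^2*m^4" using monpos[of e m 2 4] assms by (simp add: less_imp_le)
  have b10a: "e^3*m \<le> 7/100000000" using mon[of e "1/100000000" m 3 1] assms by (simp add: less_imp_le)
  have b10b: "0 \<le> e^3*m" using monpos[of e m 3 1] assms by (simp add: less_imp_le)
  have b11a: "e^3*m^2 \<le> 49/100000000" using mon[of e "1/100000000" m 3 2] assms by (simp add: less_imp_le)
  have b11b: "0 \<le> e^3*m^2" using monpos[of e m 3 2] assms by (simp add: less_imp_le)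
  have b12a: "e^3*m^3 \<le> 343/100000000" using mon[of e "1/100000000" m 3 3] assms by (simp add: less_imp_le)
  have b12b: "0 \<le> e^3*m^3" using monpos[of e m 3 3] assms by (simp add: less_imp_le)
  have b13a: "e^3*m^4 \<le> 2401/100000000" using mon[of e "1/100000000" m 3 4] assms by (simp add: less_imp_le)
  have b13b: "0 \<le> e^3*m^4" using monpos[of e m 3 4] assms by (simp add: less_imp_le)
  have b14a: "e^4*m^2 \<le> 49/100000000" using mon[of e "1/100000000" m 4 2] assms by (simp add: less_imp_le)
  have b14b: "0 \<le> e^4*m^2" using monpos[of e m 4 2] assms by (simp add: less_imp_le)
  have b15a: "e^4*m^3 \<le> 343/100000000" using mon[of e "1/100000000" m 4 3] assms by (simp add: less_imp_le)
  have b15b: "0 \<le> e^4*m^3" using monpos[of e m 4 3] assms by (simp add: less_imp_le)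
  have b16a: "e^4*m^4 \<le> 2401/100000000" using mon[of e "1/100000000" m 4 4] assms by (simp add: less_imp_le)
  have b16b: "0 \<le> e^4*m^4" using monpos[of e m 4 4] assms by (simp add: less_imp_le)
  have "m*m \<ge> 3*3" using assms by (intro mult_mono) auto
  then have m9: "9 \<le> m^2" by (simp add: power2_eq_square)
  have key: "0 \<le> 16*(1) + 24*(m) + 8*(m^2) - 8*(e) + 32*(e*m) + 44*(e*m^2) + 4*(e*m^3) - 3*(e*m^4) - 8*(e^2) + 24*(e^2*m) + 92*(e^2*m^2) + 68*(e^2*m^3) + 17*(e^2*m^4) - 16*(e^3*m) + 44*(e^3*m^2) + 60*(e^3*m^3) - 9*(e^3*m^4) + 4*(e^4*m^2) + 60*(e^4*m^3) + 59*(e^4*m^4)" by (rule lin_Q[OF b0a b0b b1a b1b b2a b2b b3a b3b b4a b4b b5a b5b b6a b6b b7a b7b b8a b8b b9a b9b b10a b10b b11a b11b b12a b12b b13a b13b b14a b14b b15a b15b b16a b16b m9 assms(3)])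
  moreover have "e^2 - e \<le> 0" using assms by (simp add: power2_eq_square mult_le_cancel_right1)
  ultimately show ?thesis unfolding eq by (simp add: mult_nonpos_nonneg)
qed

lemma lin_A4:
  fixes m m2 m4 x0 x1 x2 x3 x4 x5 x6 x7 x8 x9 x10 x11 x12 x13 x14 x15 x16 x17 x18 x19 x20 x21 x22 x23 x24 x25 x26 x27 x28 x29 x30 x31 x32 x33 x34 x35 x36 x37 x38 x39 x40 x41 :: real
  assumes "x0 \<le> 1/100000000" "0 \<le> x0" "x1 \<le> 7/100000000" "0 \<le> x1" "x2 \<le> 49/100000000" "0 \<le> x2" "x3 \<le> 343/100000000" "0 \<le> x3" "x4 \<le> 2401/100000000" "0 \<le> x4" "x5 \<le> 16807/100000000" "0 \<le> x5" "x6 \<le> 117649/100000000" "0 \<le> x6" "x7 \<le> 1/100000000" "0 \<le> x7" "x8 \<le> 7/100000000" "0 \<le> x8" "x9 \<le> 49/100000000" "0 \<le> x9" "x10 \<le> 343/100000000" "0 \<le> x10" "x11 \<le> 2401/100000000" "0 \<le> x11" "x12 \<le> 16807/100000000" "0 \<le> x12" "x13 \<le> 117649/100000000" "0 \<le> x13" "x14 \<le> 823543/100000000" "0 \<le> x14" "x15 \<le> 5764801/100000000" "0 \<le> x15" "x16 \<le> 7/100000000" "0 \<le> x16" "x17 \<le> 49/100000000" "0 \<le> x17" "x18 \<le> 343/100000000" "0 \<le> x18" "x19 \<le> 2401/100000000" "0 \<le> x19" "x20 \<le> 16807/100000000" "0 \<le> x20" "x21 \<le> 117649/100000000" "0 \<le>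 x21" "x22 \<le> 823543/100000000" "0 \<le> x22" "x23 \<le> 5764801/100000000" "0 \<le> x23" "x24 \<le> 49/100000000" "0 \<le> x24" "x25 \<le> 343/100000000" "0 \<le> x25" "x26 \<le> 2401/100000000" "0 \<le> x26" "x27 \<le> 16807/100000000" "0 \<le> x27" "x28 \<le> 117649/100000000" "0 \<le> x28" "x29 \<le> 823543/100000000" "0 \<le> x29" "x30 \<le> 5764801/100000000" "0 \<le> x30" "x31 \<le> 343/100000000" "0 \<le> x31" "x32 \<le> 2401/100000000" "0 \<le> x32" "x33 \<le> 16807/100000000" "0 \<le> x33" "x34 \<le> 117649/100000000" "0 \<le> x34" "x35 \<le> 823543/100000000" "0 \<le> x35" "x36 \<le> 5764801/100000000" "0 \<le> x36" "x37 \<le> 2401/100000000" "0 \<le> x37" "x38 \<le> 16807/100000000" "0 \<le> x38" "x39 \<le> 117649/100000000" "0 \<le> x39" "x40 \<le> 823543/100000000" "0 \<le> x40" "x41 \<le> 5764801/100000000" "0 \<le> x41" "3*m \<le> m2" "9*m2 \<le> m4" "3 \<le> m"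
  shows "1000 \<le> - 16*(1) - 96*(m) - 112*(m2) + 32*(m4) + 32*(x0) - 352*(x1) - 496*(x2) - 80*(x3) + 160*(x4) + 112*(x5) - 16*(x6) - 16*(x7) + 224*(x8) - 768*(x9) - 1872*(x10) - 672*(x11) + 112*(x12) + 216*(x13) - 24*(x14) + 1*(x15) + 224*(x16) - 112*(x17) - 1040*(x18) - 2816*(x19) - 1296*(x20) - 256*(x21) + 192*(x22) - 20*(x23) + 464*(x24) - 1200*(x25) - 1200*(x26) - 1808*(x27) - 672*(x28) - 208*(x29) + 118*(x30) + 96*(x31) - 1536*(x32) - 672*(x33) - 464*(x34) - 320*(x35) - 180*(x36) - 112*(x37) - 544*(x38) + 168*(x39) + 360*(x40) + 81*(x41)"
  using assms by linarith

lemma A4_pos: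
  assumes "0 < e" "e < 1/100000000" "3 \<le> m" "m \<le> 7"
  shows "a4 m e \<ge> 8000"
proof -
  have eq: "a4 m e = 8 * (- 16*(1) - 96*(m) - 112*(m^2) + 32*(m^4) + 32*(e) - 352*(e*m) - 496*(e*m^2) - 80*(e*m^3) + 160*(e*m^4) + 112*(e*m^5) - 16*(e*m^6) - 16*(e^2) + 224*(e^2*m) - 768*(e^2*m^2) - 1872*(e^2*m^3) - 672*(e^2*m^4) + 112*(e^2*m^5) + 216*(e^2*m^6) - 24*(e^2*m^7) + 1*(e^2*m^8) + 224*(e^3*m) - 112*(e^3*m^2) - 1040*(e^3*m^3) - 2816*(e^3*m^4) - 1296*(e^3*m^5) - 256*(e^3*m^6) + 192*(e^3*m^7) - 20*(e^3*m^8) + 464*(e^4*m^2) - 1200*(e^4*m^3) - 1200*(e^4*m^4) - 1808*(e^4*m^5) - 672*(e^4*m^6) - 208*(e^4*m^7) + 118*(e^4*m^8) + 96*(e^5*m^3) - 1536*(e^5*m^4) - 672*(e^5*m^5) - 464*(e^5*m^6) - 320*(e^5*m^7) - 180*(e^5*m^8) - 112*(e^6*m^4) - 544*(e^6*m^5) + 168*(e^6*m^6) + 360*(e^6*m^7) + 81*(e^6*m^8))" unfolding a4_def by (simp add: algebra_simps power2_eq_square power3_eq_cube eval_nat_numeral)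
  have b0a: "e \<le> 1/100000000" using mon[of e "1/100000000" m 1 0] assms by (simp add: less_imp_le)
  have b0b: "0 \<le> e" using monpos[of e m 1 0] assms by (simp add: less_imp_le)
  have b1a: "e*m \<le> 7/100000000" using mon[of e "1/100000000" m 1 1] assms by (simp add: less_imp_le)
  have b1b: "0 \<le> e*m" using monpos[of e m 1 1] assms by (simp add: less_imp_le)
  have b2a: "e*m^2 \<le> 49/100000000" using mon[of e "1/100000000" m 1 2] assms by (simp add: less_imp_le)
  have b2b: "0 \<le> e*m^2" using monpos[of e m 1 2] assms by (simp add: less_imp_le)
  have b3a: "e*m^3 \<le> 343/100000000" using mon[of e "1/100000000" m 1 3] assms by (simp add: less_imp_le)
  have b3b: "0 \<le> e*m^3" using monpos[of e m 1 3] assms by (simp add: less_imp_le)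
  have b4a: "e*m^4 \<le> 2401/100000000" using mon[of e "1/100000000" m 1 4] assms by (simp add: less_imp_le)
  have b4b: "0 \<le> e*m^4" using monpos[of e m 1 4] assms by (simp add: less_imp_le)
  have b5a: "e*m^5 \<le> 16807/100000000" using mon[of e "1/100000000" m 1 5] assms by (simp add: less_imp_le)
  have b5b: "0 \<le> e*m^5" using monpos[of e m 1 5] assms by (simp add: less_imp_le)
  have b6a: "e*m^6 \<le> 117649/100000000" using mon[of e "1/100000000" m 1 6] assms by (simp add: less_imp_le)
  have b6b: "0 \<le> e*m^6" using monpos[of e m 1 6] assms by (simp add: less_imp_le)
  have b7a: "e^2 \<le> 1/100000000" using mon[of e "1/100000000" m 2 0] assms by (simp add: less_imp_le)
  have b7b: "0 \<le> e^2" using monpos[of e m 2 0] assms by (simp add: less_imp_le)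
  have b8a: "e^2*m \<le> 7/100000000" using mon[of e "1/100000000" m 2 1] assms by (simp add: less_imp_le)
  have b8b: "0 \<le> e^2*m" using monpos[of e m 2 1] assms by (simp add: less_imp_le)
  have b9a: "e^2*m^2 \<le> 49/100000000" using mon[of e "1/100000000" m 2 2] assms by (simp add: less_imp_le)
  have b9b: "0 \<le> e^2*m^2" using monpos[of e m 2 2] assms by (simp add: less_imp_le)
  have b10a: "e^2*m^3 \<le> 343/100000000" using mon[of e "1/100000000" m 2 3] assms by (simp add: less_imp_le)
  have b10b: "0 \<le> e^2*m^3" using monpos[of e m 2 3] assms by (simp add: less_imp_le)
  have b11a: "e^2*m^4 \<le> 2401/100000000" using mon[of e "1/100000000" m 2 4] assms by (simp add: less_imp_le)
  have b11b: "0 \<le> e^2*m^4" using monpos[of e m 2 4] assms by (simp add: less_imp_le)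
  have b12a: "e^2*m^5 \<le> 16807/100000000" using mon[of e "1/100000000" m 2 5] assms by (simp add: less_imp_le)
  have b12b: "0 \<le> e^2*m^5" using monpos[of e m 2 5] assms by (simp add: less_imp_le)
  have b13a: "e^2*m^6 \<le> 117649/100000000" using mon[of e "1/100000000" m 2 6] assms by (simp add: less_imp_le)
  have b13b: "0 \<le> e^2*m^6" using monpos[of e m 2 6] assms by (simp add: less_imp_le)
  have b14a: "e^2*m^7 \<le> 823543/100000000" using mon[of e "1/100000000" m 2 7] assms by (simp add: less_imp_le)
  have b14b: "0 \<le> e^2*m^7" using monpos[of e m 2 7] assms by (simp add: less_imp_le)
  have b15a: "e^2*m^8 \<le> 5764801/100000000" using mon[of e "1/100000000" m 2 8] assms by (simp add: less_imp_le)
  have b15b: "0 \<le> e^2*m^8" using monpos[of e m 2 8] assms by (simp add: less_imp_le)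
  have b16a: "e^3*m \<le> 7/100000000" using mon[of e "1/100000000" m 3 1] assms by (simp add: less_imp_le)
  have b16b: "0 \<le> e^3*m" using monpos[of e m 3 1] assms by (simp add: less_imp_le)
  have b17a: "e^3*m^2 \<le> 49/100000000" using mon[of e "1/100000000" m 3 2] assms by (simp add: less_imp_le)
  have b17b: "0 \<le> e^3*m^2" using monpos[of e m 3 2] assms by (simp add: less_imp_le)
  have b18a: "e^3*m^3 \<le> 343/100000000" using mon[of e "1/100000000" m 3 3] assms by (simp add: less_imp_le)
  have b18b: "0 \<le> e^3*m^3" using monpos[of e m 3 3] assms by (simp add: less_imp_le)
  have b19a: "e^3*m^4 \<le> 2401/100000000" using mon[of e "1/100000000" m 3 4] assms by (simp add: less_imp_le)
  have b19b: "0 \<le> e^3*m^4" using monpos[of e m 3 4] assms by (simp add: less_imp_le)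
  have b20a: "e^3*m^5 \<le> 16807/100000000" using mon[of e "1/100000000" m 3 5] assms by (simp add: less_imp_le)
  have b20b: "0 \<le> e^3*m^5" using monpos[of e m 3 5] assms by (simp add: less_imp_le)
  have b21a: "e^3*m^6 \<le> 117649/100000000" using mon[of e "1/100000000" m 3 6] assms by (simp add: less_imp_le)
  have b21b: "0 \<le> e^3*m^6" using monpos[of e m 3 6] assms by (simp add: less_imp_le)
  have b22a: "e^3*m^7 \<le> 823543/100000000" using mon[of e "1/100000000" m 3 7] assms by (simp add: less_imp_le)
  have b22b: "0 \<le> e^3*m^7" using monpos[of e m 3 7] assms by (simp add: less_imp_le)
  have b23a: "e^3*m^8 \<le> 5764801/100000000" using mon[of e "1/100000000" m 3 8] assms by (simp add: less_imp_le)
  have b23b: "0 \<le> e^3*m^8" using monpos[of e m 3 8] assms by (simp add: less_imp_le)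
  have b24a: "e^4*m^2 \<le> 49/100000000" using mon[of e "1/100000000" m 4 2] assms by (simp add: less_imp_le)
  have b24b: "0 \<le> e^4*m^2" using monpos[of e m 4 2] assms by (simp add: less_imp_le)
  have b25a: "e^4*m^3 \<le> 343/100000000" using mon[of e "1/100000000" m 4 3] assms by (simp add: less_imp_le)
  have b25b: "0 \<le> e^4*m^3" using monpos[of e m 4 3] assms by (simp add: less_imp_le)
  have b26a: "e^4*m^4 \<le> 2401/100000000" using mon[of e "1/100000000" m 4 4] assms by (simp add: less_imp_le)
  have b26b: "0 \<le> e^4*m^4" using monpos[of e m 4 4] assms by (simp add: less_imp_le)
  have b27a: "e^4*m^5 \<le> 16807/100000000" using mon[of e "1/100000000" m 4 5] assms by (simp add: less_imp_le)
  have b27b: "0 \<le> e^4*m^5" using monpos[of e m 4 5] assms by (simp add: less_imp_le)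
  have b28a: "e^4*m^6 \<le> 117649/100000000" using mon[of e "1/100000000" m 4 6] assms by (simp add: less_imp_le)
  have b28b: "0 \<le> e^4*m^6" using monpos[of e m 4 6] assms by (simp add: less_imp_le)
  have b29a: "e^4*m^7 \<le> 823543/100000000" using mon[of e "1/100000000" m 4 7] assms by (simp add: less_imp_le)
  have b29b: "0 \<le> e^4*m^7" using monpos[of e m 4 7] assms by (simp add: less_imp_le)
  have b30a: "e^4*m^8 \<le> 5764801/100000000" using mon[of e "1/100000000" m 4 8] assms by (simp add: less_imp_le)
  have b30b: "0 \<le> e^4*m^8" using monpos[of e m 4 8] assms by (simp add: less_imp_le)
  have b31a: "e^5*m^3 \<le> 343/100000000" using mon[of e "1/100000000" m 5 3] assms by (simp add: less_imp_le)
  have b31b: "0 \<le> e^5*m^3" using monpos[of e m 5 3] assms by (simp add: less_imp_le)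
  have b32a: "e^5*m^4 \<le> 2401/100000000" using mon[of e "1/100000000" m 5 4] assms by (simp add: less_imp_le)
  have b32b: "0 \<le> e^5*m^4" using monpos[of e m 5 4] assms by (simp add: less_imp_le)
  have b33a: "e^5*m^5 \<le> 16807/100000000" using mon[of e "1/100000000" m 5 5] assms by (simp add: less_imp_le)
  have b33b: "0 \<le> e^5*m^5" using monpos[of e m 5 5] assms by (simp add: less_imp_le)
  have b34a: "e^5*m^6 \<le> 117649/100000000" using mon[of e "1/100000000" m 5 6] assms by (simp add: less_imp_le)
  have b34b: "0 \<le> e^5*m^6" using monpos[of e m 5 6] assms by (simp add: less_imp_le)
  have b35a: "e^5*m^7 \<le> 823543/100000000" using mon[of e "1/100000000" m 5 7] assms by (simp add: less_imp_le)
  have b35b: "0 \<le> e^5*m^7" using monpos[of e m 5 7] assms by (simp add: less_imp_le)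
  have b36a: "e^5*m^8 \<le> 5764801/100000000" using mon[of e "1/100000000" m 5 8] assms by (simp add: less_imp_le)
  have b36b: "0 \<le> e^5*m^8" using monpos[of e m 5 8] assms by (simp add: less_imp_le)
  have b37a: "e^6*m^4 \<le> 2401/100000000" using mon[of e "1/100000000" m 6 4] assms by (simp add: less_imp_le)
  have b37b: "0 \<le> e^6*m^4" using monpos[of e m 6 4] assms by (simp add: less_imp_le)
  have b38a: "e^6*m^5 \<le> 16807/100000000" using mon[of e "1/100000000" m 6 5] assms by (simp add: less_imp_le)
  have b38b: "0 \<le> e^6*m^5" using monpos[of e m 6 5] assms by (simp add: less_imp_le)
  have b39a: "e^6*m^6 \<le> 117649/100000000" using mon[of e "1/100000000" m 6 6] assms by (simp add: less_imp_le)
  have b39b: "0 \<le> e^6*m^6" using monpos[of e m 6 6] assms by (simp add: less_imp_le)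
  have b40a: "e^6*m^7 \<le> 823543/100000000" using mon[of e "1/100000000" m 6 7] assms by (simp add: less_imp_le)
  have b40b: "0 \<le> e^6*m^7" using monpos[of e m 6 7] assms by (simp add: less_imp_le)
  have b41a: "e^6*m^8 \<le> 5764801/100000000" using mon[of e "1/100000000" m 6 8] assms by (simp add: less_imp_le)
  have b41b: "0 \<le> e^6*m^8" using monpos[of e m 6 8] assms by (simp add: less_imp_le)
  have "m*m \<ge> 3*m" using assms by (intro mult_right_mono) auto
  then have h2: "3*m \<le> m^2" by (simp add: power2_eq_square)
  have "m*m \<ge> 3*3" using assms by (intro mult_mono) auto
  then have m9: "m^2 \<ge> 9" by (simp add: power2_eq_square)
  have "m^2*m^2 \<ge> 9*m^2" using m9 by (intro mult_right_mono) auto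
  then have h4: "9*m^2 \<le> m^4" by (simp add: power4_eq_xxxx power2_eq_square mult.assoc)
  have key: "1000 \<le> - 16*(1) - 96*(m) - 112*(m^2) + 32*(m^4) + 32*(e) - 352*(e*m) - 496*(e*m^2) - 80*(e*m^3) + 160*(e*m^4) + 112*(e*m^5) - 16*(e*m^6) - 16*(e^2) + 224*(e^2*m) - 768*(e^2*m^2) - 1872*(e^2*m^3) - 672*(e^2*m^4) + 112*(e^2*m^5) + 216*(e^2*m^6) - 24*(e^2*m^7) + 1*(e^2*m^8) + 224*(e^3*m) - 112*(e^3*m^2) - 1040*(e^3*m^3) - 2816*(e^3*m^4) - 1296*(e^3*m^5) - 256*(e^3*m^6) + 192*(e^3*m^7) - 20*(e^3*m^8) + 464*(e^4*m^2) - 1200*(e^4*m^3) - 1200*(e^4*m^4) - 1808*(e^4*m^5) - 672*(e^4*m^6) - 208*(e^4*m^7) + 118*(e^4*m^8) + 96*(e^5*m^3) - 1536*(e^5*m^4) - 672*(e^5*m^5) - 464*(e^5*m^6) - 320*(e^5*m^7) - 180*(e^5*m^8) - 112*(e^6*m^4) - 544*(e^6*m^5) + 168*(e^6*m^6) + 360*(e^6*m^7) + 81*(e^6*m^8)" by (rule lin_A4[OF b0a b0b b1a b1b b2a b2b b3a b3b b4a b4b b5a b5b b6a b6b b7a b7b b8a b8b b9a b9b b10a b10b b11a b11b b12a b12b b13a b13b b14a b14b b15a b15b b16a b16b b17a b17b b18a b18b b19a b19b b20a b20b b21a b21b b22a b22b b23a b23b b24a b24b b25a b25b b26a b26b b27a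 b27b b28a b28b b29a b29b b30a b30b b31a b31b b32a b32b b33a b33b b34a b34b b35a b35b b36a b36b b37a b37b b38a b38b b39a b39b b40a b40b b41a b41b h2 h4 assms(3)])
  show ?thesis unfolding eq by (rule h8[OF key])
qed

lemma lin_A6:
  fixes m m2 m4 x0 x1 x2 x3 x4 x5 x6 x7 x8 x9 x10 x11 x12 x13 x14 x15 x16 x17 x18 x19 x20 x21 x22 x23 x24 x25 x26 x27 x28 x29 x30 x31 x32 x33 x34 x35 x36 x37 :: real
  assumes "x0 \<le> 7" "0 \<le> x0" "x1 \<le> 49" "0 \<le> x1" "x2 \<le> 343" "0 \<le> x2" "x3 \<le> 2401" "0 \<le> x3" "x4 \<le> 16807" "0 \<le> x4" "x5 \<le> 117649" "0 \<le> x5" "x6 \<le> 7" "0 \<le> x6" "x7 \<le> 49" "0 \<le> x7" "x8 \<le> 343" "0 \<le> x8" "x9 \<le> 2401" "0 \<le> x9" "x10 \<le> 16807" "0 \<le> x10" "x11 \<le> 117649" "0 \<le> x11" "x12 \<le> 823543" "0 \<le> x12" "x13 \<le> 49" "0 \<le> x13" "x14 \<le> 343" "0 \<le> x14" "x15 \<le> 2401" "0 \<le> x15" "x16 \<le> 16807" "0 \<le> x16" "x17 \<le> 117649" "0 \<le> x17" "x18 \<le> 823543" "0 \<le> x18" "x19 \<le> 5764801" "0 \<le> x19" "x20 \<le> 343" "0 \<le> x20" "x21 \<le> 2401" "0 \<le> x21" "x22 \<le> 16807" "0 \<le> x22" "x23 \<le> 117649" "0 \<le> x23" "x24 \<le>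 823543" "0 \<le> x24" "x25 \<le> 5764801" "0 \<le> x25" "x26 \<le> 2401" "0 \<le> x26" "x27 \<le> 16807" "0 \<le> x27" "x28 \<le> 117649" "0 \<le> x28" "x29 \<le> 823543" "0 \<le> x29" "x30 \<le> 5764801" "0 \<le> x30" "x31 \<le> 16807" "0 \<le> x31" "x32 \<le> 117649" "0 \<le> x32" "x33 \<le> 823543" "0 \<le> x33" "x34 \<le> 5764801" "0 \<le> x34" "x35 \<le> 117649" "0 \<le> x35" "x36 \<le> 823543" "0 \<le> x36" "x37 \<le> 5764801" "0 \<le> x37" "3 \<le> m"
  shows "- 8*(x0) + 12*(x1) + 60*(x2) + 51*(x3) + 10*(x4) - 1*(x5) + 8*(x6) - 32*(x7) - 80*(x8) + 22*(x9) + 82*(x10) + 17*(x11) - 3*(x12) - 44*(x13) - 124*(x14) - 241*(x15) - 138*(x16) + 42*(x17) + 13*(x18) - 2*(x19) - 112*(x20) - 180*(x21) - 226*(x22) - 171*(x23) + 9*(x24) + 6*(x25) - 36*(x26) - 24*(x27) - 39*(x28) - 77*(x29) - 2*(x30) + 40*(x31) + 72*(x32) + 42*(x33) - 6*(x34) + 16*(x35) + 16*(x36) + 4*(x37) \<le> 299326804"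
  using assms by linarith

lemma A6_bd:
  assumes "0 < e" "e < 1/100000000" "3 \<le> m" "m \<le> 7"
  shows "a6 m e \<le> 2394614432"
proof -
  have eq: "a6 m e = 8 * (- 8*(m) + 12*(m^2) + 60*(m^3) + 51*(m^4) + 10*(m^5) - 1*(m^6) + 8*(e*m) - 32*(e*m^2) - 80*(e*m^3) + 22*(e*m^4) + 82*(e*m^5) + 17*(e*m^6) - 3*(e*m^7) - 44*(e^2*m^2) - 124*(e^2*m^3) - 241*(e^2*m^4) - 138*(e^2*m^5) + 42*(e^2*m^6) + 13*(e^2*m^7) - 2*(e^2*m^8) - 112*(e^3*m^3) - 180*(e^3*m^4) - 226*(e^3*m^5) - 171*(e^3*m^6) + 9*(e^3*m^7) + 6*(e^3*m^8) - 36*(e^4*m^4) - 24*(e^4*m^5) - 39*(e^4*m^6) - 77*(e^4*m^7) - 2*(e^4*m^8) + 40*(e^5*m^5) + 72*(e^5*m^6) + 42*(e^5*m^7) - 6*(e^5*m^8) + 16*(e^6*m^6) + 16*(e^6*m^7) + 4*(e^6*m^8))" unfolding a6_def by (simp add: algebra_simps power2_eq_square power3_eq_cube eval_nat_numeral)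
  have b0a: "m \<le> 7" using monle[of e m 0 1] assms by (simp add: less_imp_le)
  have b0b: "0 \<le> m" using monpos[of e m 0 1] assms by (simp add: less_imp_le)
  have b1a: "m^2 \<le> 49" using monle[of e m 0 2] assms by (simp add: less_imp_le)
  have b1b: "0 \<le> m^2" using monpos[of e m 0 2] assms by (simp add: less_imp_le)
  have b2a: "m^3 \<le> 343" using monle[of e m 0 3] assms by (simp add: less_imp_le)
  have b2b: "0 \<le> m^3" using monpos[of e m 0 3] assms by (simp add: less_imp_le)
  have b3a: "m^4 \<le> 2401" using monle[of e m 0 4] assms by (simp add: less_imp_le)
  have b3b: "0 \<le> m^4" using monpos[of e m 0 4] assms by (simp add: less_imp_le)
  have b4a: "m^5 \<le> 16807" using monle[of e m 0 5] assms by (simp add: less_imp_le)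
  have b4b: "0 \<le> m^5" using monpos[of e m 0 5] assms by (simp add: less_imp_le)
  have b5a: "m^6 \<le> 117649" using monle[of e m 0 6] assms by (simp add: less_imp_le)
  have b5b: "0 \<le> m^6" using monpos[of e m 0 6] assms by (simp add: less_imp_le)
  have b6a: "e*m \<le> 7" using monle[of e m 1 1] assms by (simp add: less_imp_le)
  have b6b: "0 \<le> e*m" using monpos[of e m 1 1] assms by (simp add: less_imp_le)
  have b7a: "e*m^2 \<le> 49" using monle[of e m 1 2] assms by (simp add: less_imp_le)
  have b7b: "0 \<le> e*m^2" using monpos[of e m 1 2] assms by (simp add: less_imp_le)
  have b8a: "e*m^3 \<le> 343" using monle[of e m 1 3] assms by (simp add: less_imp_le)
  have b8b: "0 \<le> e*m^3" using monpos[of e m 1 3] assms by (simp add: less_imp_le)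
  have b9a: "e*m^4 \<le> 2401" using monle[of e m 1 4] assms by (simp add: less_imp_le)
  have b9b: "0 \<le> e*m^4" using monpos[of e m 1 4] assms by (simp add: less_imp_le)
  have b10a: "e*m^5 \<le> 16807" using monle[of e m 1 5] assms by (simp add: less_imp_le)
  have b10b: "0 \<le> e*m^5" using monpos[of e m 1 5] assms by (simp add: less_imp_le)
  have b11a: "e*m^6 \<le> 117649" using monle[of e m 1 6] assms by (simp add: less_imp_le)
  have b11b: "0 \<le> e*m^6" using monpos[of e m 1 6] assms by (simp add: less_imp_le)
  have b12a: "e*m^7 \<le> 823543" using monle[of e m 1 7] assms by (simp add: less_imp_le)
  have b12b: "0 \<le> e*m^7" using monpos[of e m 1 7] assms by (simp add: less_imp_le)
  have b13a: "e^2*m^2 \<le> 49" using monle[of e m 2 2] assms by (simp add: less_imp_le)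
  have b13b: "0 \<le> e^2*m^2" using monpos[of e m 2 2] assms by (simp add: less_imp_le)
  have b14a: "e^2*m^3 \<le> 343" using monle[of e m 2 3] assms by (simp add: less_imp_le)
  have b14b: "0 \<le> e^2*m^3" using monpos[of e m 2 3] assms by (simp add: less_imp_le)
  have b15a: "e^2*m^4 \<le> 2401" using monle[of e m 2 4] assms by (simp add: less_imp_le)
  have b15b: "0 \<le> e^2*m^4" using monpos[of e m 2 4] assms by (simp add: less_imp_le)
  have b16a: "e^2*m^5 \<le> 16807" using monle[of e m 2 5] assms by (simp add: less_imp_le)
  have b16b: "0 \<le> e^2*m^5" using monpos[of e m 2 5] assms by (simp add: less_imp_le)
  have b17a: "e^2*m^6 \<le> 117649" using monle[of e m 2 6] assms by (simp add: less_imp_le)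
  have b17b: "0 \<le> e^2*m^6" using monpos[of e m 2 6] assms by (simp add: less_imp_le)
  have b18a: "e^2*m^7 \<le> 823543" using monle[of e m 2 7] assms by (simp add: less_imp_le)
  have b18b: "0 \<le> e^2*m^7" using monpos[of e m 2 7] assms by (simp add: less_imp_le)
  have b19a: "e^2*m^8 \<le> 5764801" using monle[of e m 2 8] assms by (simp add: less_imp_le)
  have b19b: "0 \<le> e^2*m^8" using monpos[of e m 2 8] assms by (simp add: less_imp_le)
  have b20a: "e^3*m^3 \<le> 343" using monle[of e m 3 3] assms by (simp add: less_imp_le)
  have b20b: "0 \<le> e^3*m^3" using monpos[of e m 3 3] assms by (simp add: less_imp_le)
  have b21a: "e^3*m^4 \<le> 2401" using monle[of e m 3 4] assms by (simp add: less_imp_le)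
  have b21b: "0 \<le> e^3*m^4" using monpos[of e m 3 4] assms by (simp add: less_imp_le)
  have b22a: "e^3*m^5 \<le> 16807" using monle[of e m 3 5] assms by (simp add: less_imp_le)
  have b22b: "0 \<le> e^3*m^5" using monpos[of e m 3 5] assms by (simp add: less_imp_le)
  have b23a: "e^3*m^6 \<le> 117649" using monle[of e m 3 6] assms by (simp add: less_imp_le)
  have b23b: "0 \<le> e^3*m^6" using monpos[of e m 3 6] assms by (simp add: less_imp_le)
  have b24a: "e^3*m^7 \<le> 823543" using monle[of e m 3 7] assms by (simp add: less_imp_le)
  have b24b: "0 \<le> e^3*m^7" using monpos[of e m 3 7] assms by (simp add: less_imp_le)
  have b25a: "e^3*m^8 \<le> 5764801" using monle[of e m 3 8] assms by (simp add: less_imp_le)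
  have b25b: "0 \<le> e^3*m^8" using monpos[of e m 3 8] assms by (simp add: less_imp_le)
  have b26a: "e^4*m^4 \<le> 2401" using monle[of e m 4 4] assms by (simp add: less_imp_le)
  have b26b: "0 \<le> e^4*m^4" using monpos[of e m 4 4] assms by (simp add: less_imp_le)
  have b27a: "e^4*m^5 \<le> 16807" using monle[of e m 4 5] assms by (simp add: less_imp_le)
  have b27b: "0 \<le> e^4*m^5" using monpos[of e m 4 5] assms by (simp add: less_imp_le)
  have b28a: "e^4*m^6 \<le> 117649" using monle[of e m 4 6] assms by (simp add: less_imp_le)
  have b28b: "0 \<le> e^4*m^6" using monpos[of e m 4 6] assms by (simp add: less_imp_le)
  have b29a: "e^4*m^7 \<le> 823543" using monle[of e m 4 7] assms by (simp add: less_imp_le)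
  have b29b: "0 \<le> e^4*m^7" using monpos[of e m 4 7] assms by (simp add: less_imp_le)
  have b30a: "e^4*m^8 \<le> 5764801" using monle[of e m 4 8] assms by (simp add: less_imp_le)
  have b30b: "0 \<le> e^4*m^8" using monpos[of e m 4 8] assms by (simp add: less_imp_le)
  have b31a: "e^5*m^5 \<le> 16807" using monle[of e m 5 5] assms by (simp add: less_imp_le)
  have b31b: "0 \<le> e^5*m^5" using monpos[of e m 5 5] assms by (simp add: less_imp_le)
  have b32a: "e^5*m^6 \<le> 117649" using monle[of e m 5 6] assms by (simp add: less_imp_le)
  have b32b: "0 \<le> e^5*m^6" using monpos[of e m 5 6] assms by (simp add: less_imp_le)
  have b33a: "e^5*m^7 \<le> 823543" using monle[of e m 5 7] assms by (simp add: less_imp_le)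
  have b33b: "0 \<le> e^5*m^7" using monpos[of e m 5 7] assms by (simp add: less_imp_le)
  have b34a: "e^5*m^8 \<le> 5764801" using monle[of e m 5 8] assms by (simp add: less_imp_le)
  have b34b: "0 \<le> e^5*m^8" using monpos[of e m 5 8] assms by (simp add: less_imp_le)
  have b35a: "e^6*m^6 \<le> 117649" using monle[of e m 6 6] assms by (simp add: less_imp_le)
  have b35b: "0 \<le> e^6*m^6" using monpos[of e m 6 6] assms by (simp add: less_imp_le)
  have b36a: "e^6*m^7 \<le> 823543" using monle[of e m 6 7] assms by (simp add: less_imp_le)
  have b36b: "0 \<le> e^6*m^7" using monpos[of e m 6 7] assms by (simp add: less_imp_le)
  have b37a: "e^6*m^8 \<le> 5764801" using monle[of e m 6 8] assms by (simp add: less_imp_le)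
  have b37b: "0 \<le> e^6*m^8" using monpos[of e m 6 8] assms by (simp add: less_imp_le)
  have key: "- 8*(m) + 12*(m^2) + 60*(m^3) + 51*(m^4) + 10*(m^5) - 1*(m^6) + 8*(e*m) - 32*(e*m^2) - 80*(e*m^3) + 22*(e*m^4) + 82*(e*m^5) + 17*(e*m^6) - 3*(e*m^7) - 44*(e^2*m^2) - 124*(e^2*m^3) - 241*(e^2*m^4) - 138*(e^2*m^5) + 42*(e^2*m^6) + 13*(e^2*m^7) - 2*(e^2*m^8) - 112*(e^3*m^3) - 180*(e^3*m^4) - 226*(e^3*m^5) - 171*(e^3*m^6) + 9*(e^3*m^7) + 6*(e^3*m^8) - 36*(e^4*m^4) - 24*(e^4*m^5) - 39*(e^4*m^6) - 77*(e^4*m^7) - 2*(e^4*m^8) + 40*(e^5*m^5) + 72*(e^5*m^6) + 42*(e^5*m^7) - 6*(e^5*m^8) + 16*(e^6*m^6) + 16*(e^6*m^7) + 4*(e^6*m^8) \<le> 299326804" by (rule lin_A6[OF b0a b0b b1a b1b b2a b2b b3a b3b b4a b4b b5a b5b b6a b6b b7a b7b b8a b8b b9a b9b b10a b10b b11a b11b b12a b12b b13a b13b b14a b14b b15a b15b b16a b16b b17a b17b b18a b18b b19a b19b b20a b20b b21a b21b b22a b22b b23a b23b b24a b24b b25a b25b b26a b26b b27a b27b b28a b28b b29a b29b b30a b30b b31a b31b b32a b32b b33a b33b b34a b34b b35a b35b b36a b36b b37a b37b assms(3)])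
  show ?thesis unfolding eq by (rule h8b[OF key])
qed


lemma imag: "Im (poly (map_poly complex_of_real (P7 m e)) (\<i> * complex_of_real v)) = v*(-a0 m e*v^6 + a2 m e*v^4 - a4 m e*v^2 + a6 m e)"
  unfolding P7_def
  by (simp add: map_poly_pCons algebra_simps power2_eq_square power3_eq_cube eval_nat_numeral)

theorem lemma5p2:
  "\<exists>\<upsilon>0 > 0. \<exists>\<epsilon>s > 0. \<forall>m \<in> {3..7::real}. \<forall>e \<in> {0<..<\<epsilon>s}. \<forall>\<upsilon> > 0.
     poly (map_poly complex_of_real (P7 m e)) (\<i> * complex_of_real \<upsilon>) = 0 \<longrightarrow> \<upsilon> < \<upsilon>0"
proof (rule exI[where x="1000000::real"], rule conjI, simp, rule exI[where x="1/100000000::real"], rule conjI, simp, intro ballI allI impI)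
  fix m e v :: real
  assume m: "m \<in> {3..7}" and e: "e \<in> {0<..<1/100000000}" and v: "0 < v"
    and r: "poly (map_poly complex_of_real (P7 m e)) (\<i> * complex_of_real v) = 0"
  show "v < 1000000"
  proof (rule ccontr)
    assume "\<not> v < 1000000"
    then have vb: "v \<ge> 1000000" by simp
    have h0: "a0 m e \<ge> 0" unfolding a0_def by (simp add: power_even_eq)
    have h2: "a2 m e \<le> 0" using Q_pos m e by auto
    have h4: "a4 m e \<ge> 8000" using A4_pos m e by auto
    have h6: "a6 m e \<le> 2400000000" using A6_bd[of e m] m e by auto
    have "v^2 \<ge> 1000000^2" using vb by (intro power_mono) auto
    then have "a4 m e * v^2 \<ge> 8000 * 1000000^2" using h4 by (intro mult_mono) auto
    then have "a4 m e * v^2 \<ge> 8000000000000000" by simp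
    moreover have "a0 m e * v^6 \<ge> 0" using h0 by simp
    moreover have "a2 m e * v^4 \<le> 0" using h2 by (simp add: mult_nonpos_nonneg)
    ultimately have "-a0 m e*v^6 + a2 m e*v^4 - a4 m e*v^2 + a6 m e < 0" using h6 by linarith
    then have "v*(-a0 m e*v^6 + a2 m e*v^4 - a4 m e*v^2 + a6 m e) < 0" using v by (simp add: mult_pos_neg)
    moreover have "v*(-a0 m e*v^6 + a2 m e*v^4 - a4 m e*v^2 + a6 m e) = 0" using r imag[of m e v] by simp
    ultimately show False by linarith
  qed
qed

end
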